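(* There exist absolute constants $c,C>0$ such that for every real $q\ge1$, every integer $d$ with $d-1>2q$, and every interval $[a,b]\subseteq\mathbb{R}$, if $U_1,\dots,U_{d-1}$ are iid uniform on $[0,1]$, then $$\mathbf{P}\Big[\sum_{i=1}^{d-1}U_i^q\in[a,b]\Big]\le\exp(-c\,d/q)+C\,(b-a)\sqrt{q/d}.$$ *)

theory Defs
  imports "HOL-Probability.Probability"
begin

definition iid_uniform01 :: "nat \<Rightarrow> (nat \<Rightarrow> real) measure" where
  "iid_uniform01 n = PiM {..<n} (\<lambda>_. uniform_measure lborel {0..1::real})"

end

theory Submission
  imports Defs
begin

definition Lam :: "real \<Rightarrow> real \<Rightarrow> (real \<Rightarrow> ennreal) \<Rightarrow> real \<Rightarrow> ennreal" where
  "Lam c l F s = ennreal (1/l) * (\<integral>\<^sup>+x. F (s + x) * indicator {c..c+l} x \<partial>lborel)"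

definition Hh :: "real \<Rightarrow> real \<Rightarrow> (real \<Rightarrow> ennreal) \<Rightarrow> real \<Rightarrow> ennreal" where
  "Hh c l F s = ennreal (2/l) * (\<integral>\<^sup>+x. F (s + x) * indicator {c..<c+l/2} x \<partial>lborel)"

definition Pq :: "real \<Rightarrow> (real \<Rightarrow> ennreal) \<Rightarrow> real \<Rightarrow> ennreal" where
  "Pq q F s = (\<integral>\<^sup>+u. F (s + u powr q) * indicator {0..1} u \<partial>lborel)"

lemma Lam_meas[measurable]: assumes [measurable]: "F \<in> borel_measurable borel" shows "Lam c l F \<in> borel_measurable borel"
  unfolding Lam_def by measurable

lemma Hh_meas[measurable]: assumes [measurable]: "F \<in> borel_measurable borel" shows "Hh c l F \<in> borel_measurable borel"
  unfolding Hh_def by measurable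

lemma Pq_meas[measurable]: assumes [measurable]: "F \<in> borel_measurable borel" shows "Pq q F \<in> borel_measurable borel"
  unfolding Pq_def by measurable

lemma Lam_iter_meas[measurable]: assumes [measurable]: "F \<in> borel_measurable borel" shows "(Lam c l ^^ n) F \<in> borel_measurable borel"
  by (induction n) auto
lemma Hh_iter_meas[measurable]: assumes [measurable]: "F \<in> borel_measurable borel" shows "(Hh c l ^^ n) F \<in> borel_measurable borel"
  by (induction n) auto
lemma Pq_iter_meas[measurable]: assumes [measurable]: "F \<in> borel_measurable borel" shows "(Pq q ^^ n) F \<in> borel_measurable borel"
  by (induction n) auto

lemma nn_int_ind_Icc: "(\<integral>\<^sup>+x. indicator {a..b} x \<partial>lborel) = ennreal (b - a)" if "a \<le> (b::real)"
  using that by simp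

lemma Lam_le:
  assumes l: "l > 0" and F: "\<And>t. F t \<le> M"
  shows "Lam c l F s \<le> M"
proof -
  have "(\<integral>\<^sup>+x. F (s + x) * indicator {c..c+l} x \<partial>lborel) \<le> (\<integral>\<^sup>+x. M * indicator {c..c+l} x \<partial>lborel)"
    by (intro nn_integral_mono mult_right_mono F) auto
  also have "\<dots> = M * ennreal l"
    using l by (simp add: nn_integral_cmult)
  finally have "Lam c l F s \<le> ennreal (1/l) * (M * ennreal l)"
    unfolding Lam_def by (intro mult_left_mono) auto
  also have "\<dots> = M"
    using l by (simp add: ennreal_mult'[symmetric] mult.commute mult.left_commute)
  finally show ?thesis .
qed

lemma Hh_le:
  assumes l: "l > 0" and F: "\<And>t. F t \<le> M"
  shows "Hh c l F s \<le> M"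
proof -
  have "(\<integral>\<^sup>+x. F (s + x) * indicator {c..<c+l/2} x \<partial>lborel) \<le> (\<integral>\<^sup>+x. M * indicator {c..<c+l/2} x \<partial>lborel)"
    by (intro nn_integral_mono mult_right_mono F) auto
  also have "\<dots> = M * ennreal (l/2)"
    using l by (simp add: nn_integral_cmult)
  finally have "Hh c l F s \<le> ennreal (2/l) * (M * ennreal (l/2))"
    unfolding Hh_def by (intro mult_left_mono) auto
  also have "\<dots> = M"
    using l by (simp add: ennreal_mult'[symmetric] mult.commute mult.left_commute)
  finally show ?thesis .
qed

lemma Hh_shift: "Hh c l (\<lambda>t. F (t + d)) s = Hh c l F (s + d)"
  unfolding Hh_def by (simp add: add_ac)

lemma Hh_sum:
  assumes "finite J" and [measurable]: "\<And>j. j \<in> J \<Longrightarrow> G j \<in> borel_measurable borel"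
  shows "Hh c l (\<lambda>t. \<Sum>j\<in>J. G j t) s = (\<Sum>j\<in>J. Hh c l (G j) s)"
proof -
  have "(\<integral>\<^sup>+x. (\<Sum>j\<in>J. G j (s + x)) * indicator {c..<c+l/2} x \<partial>lborel)
      = (\<integral>\<^sup>+x. (\<Sum>j\<in>J. G j (s + x) * indicator {c..<c+l/2} x) \<partial>lborel)"
    by (simp add: sum_distrib_right)
  also have "\<dots> = (\<Sum>j\<in>J. \<integral>\<^sup>+x. G j (s + x) * indicator {c..<c+l/2} x \<partial>lborel)"
    by (rule nn_integral_sum) auto
  finally show ?thesis unfolding Hh_def by (simp add: sum_distrib_left)
qed

lemma Hh_cmult:
  assumes [measurable]: "G \<in> borel_measurable borel"
  shows "Hh c l (\<lambda>t. k * G t) s = k * Hh c l G s"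
proof -
  have "(\<integral>\<^sup>+x. (k * G (s + x)) * indicator {c..<c+l/2} x \<partial>lborel)
      = k * (\<integral>\<^sup>+x. G (s + x) * indicator {c..<c+l/2} x \<partial>lborel)"
    by (subst nn_integral_cmult[symmetric]) (auto simp: mult.assoc)
  then show ?thesis unfolding Hh_def by (simp add: mult_ac)
qed

lemma Lam_split:
  assumes l: "l > 0" and [measurable]: "F \<in> borel_measurable borel"
  shows "Lam c l F s = ennreal (1/2) * (Hh c l F s + Hh c l F (s + l/2))"
proof -
  have e1: "(\<integral>\<^sup>+x. F (s + x) * indicator {c..c+l} x \<partial>lborel)
     = (\<integral>\<^sup>+x. F (s + x) * indicator {c..<c+l/2} x + F (s + x) * indicator {c+l/2..<c+l} x \<partial>lborel)"
  proof (rule nn_integral_cong_AE)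
    show "AE x in lborel. F (s + x) * indicator {c..c + l} x =
      F (s + x) * indicator {c..<c + l / 2} x + F (s + x) * indicator {c + l / 2..<c + l} x"
      using AE_lborel_singleton[of "c+l"]
    proof (rule eventually_mono)
      fix x :: real assume "x \<noteq> c + l"
      then show "F (s + x) * indicator {c..c + l} x =
      F (s + x) * indicator {c..<c + l / 2} x + F (s + x) * indicator {c + l / 2..<c + l} x"
        using l by (auto simp: indicator_def)
    qed
  qed
  also have "\<dots> = (\<integral>\<^sup>+x. F (s + x) * indicator {c..<c+l/2} x \<partial>lborel) + (\<integral>\<^sup>+x. F (s + x) * indicator {c+l/2..<c+l} x \<partial>lborel)"
    by (rule nn_integral_add) auto
  also have "(\<integral>\<^sup>+x. F (s + x) * indicator {c+l/2..<c+l} x \<partial>lborel)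
      = (\<integral>\<^sup>+x. F (s + l/2 + x) * indicator {c..<c+l/2} x \<partial>lborel)"
    by (subst nn_integral_real_affine[where c=1 and t="l/2"])
       (auto simp: add_ac indicator_def intro!: nn_integral_cong)
  finally have e2: "(\<integral>\<^sup>+x. F (s + x) * indicator {c..c+l} x \<partial>lborel) =
     (\<integral>\<^sup>+x. F (s + x) * indicator {c..<c+l/2} x \<partial>lborel) + (\<integral>\<^sup>+x. F (s + l/2 + x) * indicator {c..<c+l/2} x \<partial>lborel)" .
  have "ennreal (1/2) * ennreal (2/l) = ennreal (1/l)"
  proof -
    have "ennreal (1/2) * ennreal (2/l) = ennreal (1/2 * (2/l))"
      by (rule ennreal_mult[symmetric]) (use l in auto)
    then show ?thesis using l by simp
  qed
  then show ?thesis by (simp only: Lam_def Hh_def e2 distrib_left mult.assoc[symmetric])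
qed

lemma pascal_sum:
  fixes h :: "nat \<Rightarrow> 'a::comm_semiring_1"
  shows "(\<Sum>j\<le>Suc m. of_nat (Suc m choose j) * h j)
       = (\<Sum>j\<le>m. of_nat (m choose j) * h j) + (\<Sum>j\<le>m. of_nat (m choose j) * h (Suc j))"
proof -
  have a: "(\<Sum>j\<le>m. of_nat (m choose j) * h j) = (\<Sum>j\<le>Suc m. of_nat (m choose j) * h j)"
    by (simp add: binomial_eq_0)
  also have "\<dots> = h 0 + (\<Sum>j\<le>m. of_nat (m choose Suc j) * h (Suc j))"
    by (subst sum.atMost_Suc_shift) simp
  finally have a': "(\<Sum>j\<le>m. of_nat (m choose j) * h j) = h 0 + (\<Sum>j\<le>m. of_nat (m choose Suc j) * h (Suc j))" .
  have "(\<Sum>j\<le>Suc m. of_nat (Suc m choose j) * h j) = h 0 + (\<Sum>j\<le>m. of_nat (Suc m choose Suc j) * h (Suc j))"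
    by (subst sum.atMost_Suc_shift) simp
  also have "\<dots> = h 0 + (\<Sum>j\<le>m. of_nat (m choose Suc j) * h (Suc j)) + (\<Sum>j\<le>m. of_nat (m choose j) * h (Suc j))"
    by (simp add: distrib_right sum.distrib add_ac)
  finally show ?thesis using a' by simp
qed

lemma Lam_pow:
  assumes l: "l > 0" and [measurable]: "F \<in> borel_measurable borel"
  shows "(Lam c l ^^ m) F s = ennreal (1/2^m) * (\<Sum>j\<le>m. of_nat (m choose j) * (Hh c l ^^ m) F (s + j*l/2))"
proof (induction m arbitrary: s)
  case 0
  then show ?case by simp
next
  case (Suc m)
  define K where "K = (Hh c l ^^ m) F"
  have Km[measurable]: "K \<in> borel_measurable borel" unfolding K_def by measurable
  have eq: "(Lam c l ^^ m) F = (\<lambda>t. ennreal (1/2^m) * (\<Sum>j\<le>m. of_nat (m choose j) * K (t + j*l/2)))"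
    using Suc.IH unfolding K_def by auto
  have H: "Hh c l ((Lam c l ^^ m) F) t = ennreal (1/2^m) * (\<Sum>j\<le>m. of_nat (m choose j) * Hh c l K (t + j*l/2))" for t
  proof -
    have "Hh c l ((Lam c l ^^ m) F) t = ennreal (1/2^m) * Hh c l (\<lambda>t. \<Sum>j\<le>m. of_nat (m choose j) * K (t + j*l/2)) t"
      unfolding eq by (rule Hh_cmult) measurable
    also have "Hh c l (\<lambda>t. \<Sum>j\<le>m. of_nat (m choose j) * K (t + j*l/2)) t
       = (\<Sum>j\<le>m. Hh c l (\<lambda>t. of_nat (m choose j) * K (t + j*l/2)) t)"
      by (rule Hh_sum) auto
    also have "\<dots> = (\<Sum>j\<le>m. of_nat (m choose j) * Hh c l K (t + j*l/2))"
      by (intro sum.cong refl) (simp add: Hh_cmult Hh_shift)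
    finally show ?thesis .
  qed
  have "(Lam c l ^^ Suc m) F s = ennreal (1/2) * (Hh c l ((Lam c l ^^ m) F) s + Hh c l ((Lam c l ^^ m) F) (s + l/2))"
    using l by (simp add: Lam_split)
  also have "\<dots> = ennreal (1/2) * ennreal (1/2^m) * ((\<Sum>j\<le>m. of_nat (m choose j) * Hh c l K (s + j*l/2))
      + (\<Sum>j\<le>m. of_nat (m choose j) * Hh c l K (s + real (Suc j)*l/2)))"
    unfolding H by (simp add: distrib_left mult.assoc add_divide_distrib distrib_right add_ac)
  also have "\<dots> = ennreal (1/2^Suc m) * (\<Sum>j\<le>Suc m. of_nat (Suc m choose j) * Hh c l K (s + j*l/2))"
  proof -
    have "ennreal (1/2) * ennreal (1/2^m) = ennreal (1/2^Suc m)"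
      by (subst ennreal_mult[symmetric]) auto
    then show ?thesis
      by (simp only: pascal_sum[where h="\<lambda>j. Hh c l K (s + real j*l/2)"])
  qed
  finally show ?case unfolding K_def by (simp only: funpow.simps comp_def)
qed

lemma ind_sum_le1:
  assumes l: "l > 0"
  shows "(\<Sum>j\<le>N. indicator {c..<c+l/2} (y - d - real j*l/2) :: ennreal) \<le> 1"
proof -
  define A where "A = {j. y - d - real j*l/2 \<in> {c..<c+l/2}}"
  have "(\<Sum>j\<le>N. indicator {c..<c+l/2} (y - d - real j*l/2) :: ennreal) = (\<Sum>j\<le>N. indicator A j)"
    by (intro sum.cong refl) (simp add: A_def indicator_def)
  also have "\<dots> = of_nat (card ({..N} \<inter> A))"
    by (simp add: indicator_def sum.If_cases Int_def)
  also have "card ({..N} \<inter> A) \<le> Suc 0"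
  proof (subst card_le_Suc0_iff_eq, simp, intro ballI)
    fix i j assume i: "i \<in> {..N} \<inter> A" and j: "j \<in> {..N} \<inter> A"
    show "i = j"
    proof (rule ccontr)
      assume "i \<noteq> j"
      then consider "i < j" | "j < i" by linarith
      then show False
      proof cases
        case 1
        then have "real i + 1 \<le> real j" by simp
        then have "(real i + 1) * (l/2) \<le> real j * (l/2)" using l
          by (intro mult_right_mono) auto
        then have "real i * l/2 + l/2 \<le> real j * l/2" by (simp add: algebra_simps)
        moreover have "y - d - real i*l/2 < c+l/2" "c \<le> y - d - real j*l/2"
          using i j by (auto simp: A_def)
        ultimately show False by linarith
      next
        case 2
        then have "real j + 1 \<le> real i" by simp
        then have "(real j + 1) * (l/2) \<le> real i * (l/2)" using l
          by (intro mult_right_mono) auto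
        then have "real j * l/2 + l/2 \<le> real i * l/2" by (simp add: algebra_simps)
        moreover have "y - d - real j*l/2 < c+l/2" "c \<le> y - d - real i*l/2"
          using i j by (auto simp: A_def)
        ultimately show False by linarith
      qed
    qed
  qed
  then have "of_nat (card ({..N} \<inter> A)) \<le> (1::ennreal)"
    by (metis One_nat_def of_nat_1 of_nat_le_iff)
  finally show ?thesis .
qed

lemma Hh_sum_base:
  assumes l: "l > 0" and ab: "a \<le> b"
  shows "(\<Sum>j\<le>N. Hh c l (indicator {a..b}) (t + real j*l/2)) \<le> ennreal (2*(b-a)/l)"
proof -
  let ?g = "indicator {a..b} :: real \<Rightarrow> ennreal"
  let ?I = "\<lambda>j y. indicator {c..<c+l/2} (y - t - real j*l/2) :: ennreal"
  have tr: "(\<integral>\<^sup>+x. ?g (t + real j*l/2 + x) * indicator {c..<c+l/2} x \<partial>lborel)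
      = (\<integral>\<^sup>+y. ?g y * ?I j y \<partial>lborel)" for j
    by (subst nn_integral_real_affine[where c=1 and t="t + real j*l/2"]) (auto simp: add_ac)
  have "(\<Sum>j\<le>N. Hh c l ?g (t + real j*l/2)) = ennreal (2/l) * (\<Sum>j\<le>N. \<integral>\<^sup>+y. ?g y * ?I j y \<partial>lborel)"
    unfolding Hh_def tr by (simp add: sum_distrib_left)
  also have "(\<Sum>j\<le>N. \<integral>\<^sup>+y. ?g y * ?I j y \<partial>lborel) = (\<integral>\<^sup>+y. (\<Sum>j\<le>N. ?g y * ?I j y) \<partial>lborel)"
    by (rule nn_integral_sum[symmetric]) auto
  also have "\<dots> \<le> (\<integral>\<^sup>+y. ?g y * 1 \<partial>lborel)"
    unfolding sum_distrib_left[symmetric]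
    by (intro nn_integral_mono mult_left_mono ind_sum_le1[OF l]) auto
  also have "\<dots> = ennreal (b - a)" using ab by simp
  finally have "(\<Sum>j\<le>N. Hh c l ?g (t + real j*l/2)) \<le> ennreal (2/l) * ennreal (b - a)"
    by (simp add: mult_left_mono)
  also have "\<dots> = ennreal (2*(b-a)/l)"
    using l ab by (subst ennreal_mult[symmetric]) auto
  finally show ?thesis .
qed

lemma Hh_sum_bound:
  assumes l: "l > 0" and ab: "a \<le> b"
  shows "(\<Sum>j\<le>N. (Hh c l ^^ Suc k) (indicator {a..b}) (t + real j*l/2)) \<le> ennreal (2*(b-a)/l)"
proof (induction k arbitrary: t)
  case 0
  then show ?case using Hh_sum_base[OF l ab] by simp
next
  case (Suc k)
  define K where "K = (Hh c l ^^ Suc k) (indicator {a..b})"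
  have [measurable]: "K \<in> borel_measurable borel" unfolding K_def
    by (intro Hh_iter_meas) simp
  have "(\<Sum>j\<le>N. (Hh c l ^^ Suc (Suc k)) (indicator {a..b}) (t + real j*l/2))
     = (\<Sum>j\<le>N. Hh c l (\<lambda>u. K (u + real j*l/2)) t)"
    unfolding K_def by (simp add: Hh_shift)
  also have "\<dots> = Hh c l (\<lambda>u. \<Sum>j\<le>N. K (u + real j*l/2)) t"
    by (rule Hh_sum[symmetric]) auto
  also have "\<dots> \<le> ennreal (2*(b-a)/l)"
    by (rule Hh_le[OF l]) (use Suc.IH in \<open>simp add: K_def\<close>)
  finally show ?case .
qed

lemma central_rec: "(r+1) * (2*r+2 choose (r+1)) = 2*(2*r+1) * (2*r choose r)"
proof -
  have 1: "Suc r * (Suc (2*r+1) choose Suc r) = Suc (2*r+1) * ((2*r+1) choose r)"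
    by (rule Suc_times_binomial)
  have 2: "Suc r * (Suc (2*r) choose Suc r) = Suc (2*r) * ((2*r) choose r)"
    by (rule Suc_times_binomial)
  have 3: "(Suc (2*r) choose Suc r) = ((2*r+1) choose r)"
    using binomial_symmetric[of r "2*r+1"] by simp
  have "(r+1) * (2*r+2 choose (r+1)) = 2 * ((r+1) * ((2*r+1) choose r))"
    using 1 by (simp add: algebra_simps)
  also have "\<dots> = 2*(2*r+1) * (2*r choose r)"
    using 2 3 by simp
  finally show ?thesis .
qed

lemma central_bound: "(2*r choose r)^2 * (2*r+1) \<le> (16::nat)^r"
proof (induction r)
  case 0 then show ?case by simp
next
  case (Suc r)
  define Z where "Z = 2*r choose r"
  define X where "X = 2*(Suc r) choose (Suc r)"
  have rec: "(r+1) * X = 2*(2*r+1) * Z" unfolding X_def Z_def using central_rec[of r] by simp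
  have "((r+1)*X)^2 * (2*r+3) = 4*(2*r+1)*(2*r+3) * ((2*r+1) * Z^2)"
    unfolding rec by (simp add: power2_eq_square algebra_simps)
  also have "\<dots> \<le> 4*(2*r+1)*(2*r+3) * 16^r"
    using Suc.IH unfolding Z_def by (intro mult_left_mono) (simp_all add: mult.commute)
  also have "\<dots> \<le> 16 * (r+1)^2 * 16^r"
  proof -
    have "4*(2*r+1)*(2*r+3) \<le> 16*(r+1)^2" by (simp add: power2_eq_square algebra_simps)
    then show ?thesis by (rule mult_right_mono) simp
  qed
  finally have f: "((r+1)*X)^2 * (2*r+3) \<le> 16 * (r+1)^2 * 16^r" .
  have eqL: "((r+1)*X)^2 * (2*r+3) = (r+1)^2 * (X^2*(2*r+3))" by (simp only: power_mult_distrib mult.assoc)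
  have eqR: "16 * (r+1)^2 * 16^r = (r+1)^2 * (16::nat)^Suc r" by simp
  have "(r+1)^2 * (X^2 * (2*r+3)) \<le> (r+1)^2 * 16^Suc r"
    using f unfolding eqL eqR .
  then have fin: "X^2 * (2*r+3) \<le> 16^Suc r"
    by (simp del: power_Suc)
  have e: "2*Suc r + 1 = 2*r+3" by simp
  show ?case unfolding e using fin unfolding X_def .
qed

lemma binom_half_bound:
  assumes "m \<ge> 1"
  shows "real (m choose (m div 2)) / 2^m \<le> 1 / sqrt (real m)"
proof -
  have key: "(m choose (m div 2))^2 * m \<le> 4^m"
  proof (cases "even m")
    case True
    then obtain r where m: "m = 2*r" by blast
    have "(m choose (m div 2))^2 * m \<le> (2*r choose r)^2 * (2*r+1)" unfolding m by simp
    also have "\<dots> \<le> 16^r" by (rule central_bound)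
    also have "16^r = (4::nat)^m" unfolding m by (simp add: power_mult)
    finally show ?thesis .
  next
    case False
    then obtain r where m: "m = 2*r+1" using oddE by blast
    have mdiv: "m div 2 = r" unfolding m by simp
    have b: "(2*r+1 choose r) \<le> 2 * (2*r choose r)"
    proof (cases r)
      case 0 then show ?thesis by simp
    next
      case (Suc r')
      have e1: "2*r+1 = Suc (2*r)" by simp
      have "(2*r+1 choose r) = (Suc (2*r) choose Suc r')"
        unfolding e1 using Suc by (rule arg_cong)
      also have "\<dots> = (2*r choose r') + (2*r choose Suc r')" by (rule binomial_Suc_Suc)
      also have "\<dots> = (2*r choose r) + (2*r choose r')" using Suc by simp
      finally have X: "(2*r+1 choose r) = (2*r choose r) + (2*r choose r')" .
      have Y: "(2*r choose r') \<le> (2*r choose r)" by (rule binomial_maximum')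
      show ?thesis unfolding X using Y by linarith
    qed
    have "(m choose (m div 2))^2 * m \<le> (2 * (2*r choose r))^2 * (2*r+1)"
      unfolding mdiv unfolding m by (rule mult_right_mono[OF power_mono[OF b]]) simp_all
    also have "\<dots> = 4 * ((2*r choose r)^2 * (2*r+1))" by (simp add: power2_eq_square)
    also have "\<dots> \<le> 4 * 16^r" using central_bound[of r] by simp
    also have "\<dots> = 4^m" unfolding m by (simp add: power_mult)
    finally show ?thesis .
  qed
  have pos: "real m > 0" using assms by simp
  let ?C = "real (m choose (m div 2))"
  have "real ((m choose (m div 2))^2 * m) \<le> real ((4::nat)^m)"
    using key by (simp only: of_nat_le_iff)
  then have k2: "?C^2 * real m \<le> 4^m"
    by (simp only: of_nat_mult of_nat_power of_nat_numeral)
  have sq: "(?C / 2^m)^2 = ?C^2 / 4^m"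
    by (simp add: power_divide power_mult[symmetric] mult.commute[of m 2] power_mult)
  have "?C^2 \<le> 4^m / real m" using k2 pos by (simp add: pos_le_divide_eq)
  then have "?C^2 / 4^m \<le> 1 / real m"
    using pos by (simp add: pos_divide_le_eq pos_le_divide_eq mult.commute)
  then have "(real (m choose (m div 2)) / 2^m)^2 \<le> 1 / real m"
    unfolding sq .
  then have "sqrt ((real (m choose (m div 2)) / 2^m)^2) \<le> sqrt (1 / real m)"
    by (rule real_sqrt_le_mono)
  then show ?thesis by (simp add: real_sqrt_divide)
qed

lemma Lam_pow_le:
  assumes l: "l > 0" and F: "\<And>t. F t \<le> M"
  shows "(Lam c l ^^ m) F s \<le> M"
proof (induction m arbitrary: s)
  case 0 then show ?case using F by simp
next
  case (Suc m) then show ?case by (simp add: Lam_le[OF l])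
qed

lemma IH_bound:
  assumes l: "l > 0" and ab: "a \<le> b" and m: "m \<ge> 1"
  shows "(Lam c l ^^ m) (indicator {a..b}) s \<le> ennreal (2*(b-a)/(l * sqrt (real m)))"
proof -
  let ?g = "indicator {a..b} :: real \<Rightarrow> ennreal"
  let ?K = "(Hh c l ^^ m) ?g"
  let ?C = "m choose (m div 2)"
  have "(Lam c l ^^ m) ?g s = ennreal (1/2^m) * (\<Sum>j\<le>m. of_nat (m choose j) * ?K (s + j*l/2))"
    by (rule Lam_pow[OF l]) simp
  also have "\<dots> \<le> ennreal (1/2^m) * (\<Sum>j\<le>m. of_nat ?C * ?K (s + j*l/2))"
    by (intro mult_left_mono sum_mono mult_right_mono) (auto simp: binomial_maximum)
  also have "\<dots> = ennreal (1/2^m) * of_nat ?C * (\<Sum>j\<le>m. ?K (s + j*l/2))"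
    by (simp add: sum_distrib_left mult.assoc)
  also have "\<dots> \<le> ennreal (1/2^m) * of_nat ?C * ennreal (2*(b-a)/l)"
  proof -
    obtain k where mk: "m = Suc k" using m by (cases m) auto
    show ?thesis unfolding mk using Hh_sum_bound[OF l ab, where N="Suc k" and c=c and k=k and t=s]
      by (intro mult_left_mono) auto
  qed
  also have "\<dots> = ennreal (real ?C / 2^m * (2*(b-a)/l))"
    using l ab by (simp add: ennreal_mult'[symmetric] ennreal_of_nat_eq_real_of_nat mult.commute mult.left_commute)
  also have "\<dots> \<le> ennreal (1 / sqrt (real m) * (2*(b-a)/l))"
    using binom_half_bound[OF m] l ab
    by (intro ennreal_leI mult_right_mono) auto
  also have "1 / sqrt (real m) * (2*(b-a)/l) = 2*(b-a)/(l * sqrt (real m))"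
    by simp
  finally show ?thesis .
qed

lemma subst_powr:
  fixes G :: "real \<Rightarrow> ennreal"
  assumes q: "q \<ge> 1" and [measurable]: "G \<in> borel_measurable borel"
  shows "(\<integral>\<^sup>+x. G x * ennreal ((1/q) * x powr (1/q - 1)) * indicator {(1/2) powr q..1} x \<partial>lborel)
       = (\<integral>\<^sup>+u. G (u powr q) * indicator {1/2..1} u \<partial>lborel)"
proof -
  let ?h = "\<lambda>x::real. (1/q) * x powr (1/q - 1)"
  let ?f = "\<lambda>x. G x * ennreal (?h x)"
  have "(\<integral>\<^sup>+x. ?f x * indicator {(\<lambda>u. u powr q) (1/2)..(\<lambda>u. u powr q) 1} x \<partial>lborel)
      = (\<integral>\<^sup>+u. ?f ((\<lambda>u. u powr q) u) * ennreal ((\<lambda>u. q * u powr (q - 1)) u) * indicator {1/2..1} u \<partial>lborel)"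
  proof (rule nn_integral_substitution_aux)
    show "?f \<in> borel_measurable borel" by measurable
    show "\<And>x. x \<in> {1/2..1::real} \<Longrightarrow> ((\<lambda>u. u powr q) has_real_derivative q * x powr (q - 1)) (at x)"
      by (rule has_real_derivative_powr) auto
    show "continuous_on {1/2..1::real} (\<lambda>u. q * u powr (q - 1))"
      by (intro continuous_intros) auto
    show "\<And>x. x \<in> {1/2..1::real} \<Longrightarrow> 0 \<le> q * x powr (q - 1)" using q by auto
  qed auto
  also have "\<dots> = (\<integral>\<^sup>+u. G (u powr q) * indicator {1/2..1} u \<partial>lborel)"
  proof (intro nn_integral_cong)
    fix u :: real
    show "?f (u powr q) * ennreal (q * u powr (q - 1)) * indicator {1/2..1} u = G (u powr q) * indicator {1/2..1} u"
    proof (cases "u \<in> {1/2..1}")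
      case True
      then have u: "u > 0" by auto
      have "?h (u powr q) * (q * u powr (q - 1)) = u powr (q * (1/q - 1)) * u powr (q - 1)"
        using q by (simp add: powr_powr)
      also have "\<dots> = u powr (q * (1/q - 1) + (q - 1))" using u by (simp add: powr_add)
      also have "q * (1/q - 1) + (q - 1) = 0" using q by (simp add: field_simps)
      finally have e: "?h (u powr q) * (q * u powr (q - 1)) = 1" using u by simp
      have "?f (u powr q) * ennreal (q * u powr (q - 1)) = G (u powr q) * ennreal (?h (u powr q) * (q * u powr (q - 1)))"
      proof -
        have m: "ennreal (?h (u powr q)) * ennreal (q * u powr (q - 1)) = ennreal (?h (u powr q) * (q * u powr (q - 1)))"
          using q by (intro ennreal_mult[symmetric]) auto
        show ?thesis by (simp only: mult.assoc m)
      qed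
      then show ?thesis using True e by simp
    qed simp
  qed
  finally show ?thesis using q by simp
qed

lemma c_bounds:
  assumes q: "q \<ge> 1"
  shows "(1/2::real) powr q > 0" "(1/2::real) powr q \<le> 1/2"
proof -
  show "(1/2::real) powr q > 0" by simp
  have "(1/2::real) powr q = 1 / 2 powr q" by (simp add: powr_divide)
  moreover have "2 powr (1::real) \<le> 2 powr q" using q by (intro powr_mono) auto
  ultimately show "(1/2::real) powr q \<le> 1/2" by (simp add: divide_le_eq)
qed

lemma h_ge:
  assumes q: "q \<ge> 1" and x: "0 < x" "x \<le> (1::real)"
  shows "(1/q) * x powr (1/q - 1) \<ge> 1/q"
proof -
  have "x powr (1 - 1/q) \<le> 1" using q x by (intro powr_le1) auto
  moreover have "x powr (1/q - 1) = inverse (x powr (1 - 1/q))"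
    using x by (simp add: powr_minus[symmetric])
  moreover have "x powr (1 - 1/q) > 0" using x by simp
  ultimately have "x powr (1/q - 1) \<ge> 1" by (simp add: one_le_inverse)
  then show ?thesis using q by (simp add: divide_le_eq)
qed

lemma P_step:
  assumes q: "q \<ge> 1" and [measurable]: "F \<in> borel_measurable borel" and FM: "\<And>t. F t \<le> M"
  shows "Pq q F s \<le> ennreal ((1 - (1/2) powr q)/q) * Lam ((1/2) powr q) (1 - (1/2) powr q) F s
           + ennreal (1 - (1 - (1/2) powr q)/q) * M"
proof -
  define c where "c = (1/2::real) powr q"
  define l where "l = 1 - c"
  let ?h = "\<lambda>x::real. (1/q) * x powr (1/q - 1)"
  have c0: "c > 0" and c1: "c \<le> 1/2" unfolding c_def using c_bounds[OF q] by auto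
  have l0: "l > 0" and cl: "c + l = 1" unfolding l_def using c1 by auto
  have q0: "q > 0" using q by simp
  have S1: "Pq q F s = (\<integral>\<^sup>+u. F (s + u powr q) * indicator {0..<1/2} u \<partial>lborel)
      + (\<integral>\<^sup>+u. F (s + u powr q) * indicator {1/2..1} u \<partial>lborel)"
    unfolding Pq_def
    by (subst nn_integral_add[symmetric]) (auto intro!: nn_integral_cong simp: indicator_def)
  have S2: "(\<integral>\<^sup>+u. F (s + u powr q) * indicator {0..<1/2} u \<partial>lborel) \<le> M * ennreal (1/2)"
  proof -
    have "(\<integral>\<^sup>+u. F (s + u powr q) * indicator {0..<1/2} u \<partial>lborel) \<le> (\<integral>\<^sup>+u. M * indicator {0..<1/2::real} u \<partial>lborel)"
      by (intro nn_integral_mono mult_right_mono FM) auto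
    also have "\<dots> = M * ennreal (1/2)" by (simp add: nn_integral_cmult)
    finally show ?thesis .
  qed
  have S3: "(\<integral>\<^sup>+u. F (s + u powr q) * indicator {1/2..1} u \<partial>lborel)
      = (\<integral>\<^sup>+x. F (s + x) * ennreal (?h x) * indicator {c..1} x \<partial>lborel)"
    unfolding c_def by (rule subst_powr[OF q, where G="\<lambda>x. F (s + x)", symmetric]) measurable
  have S4: "F (s + x) * ennreal (?h x) * indicator {c..1} x
      \<le> ennreal (1/q) * (F (s + x) * indicator {c..1} x) + M * (ennreal (?h x - 1/q) * indicator {c..1} x)" for x
  proof (cases "x \<in> {c..1}")
    case True
    then have hx: "?h x \<ge> 1/q" using h_ge[OF q] c0 by auto
    have "ennreal (?h x) = ennreal (1/q) + ennreal (?h x - 1/q)"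
      using hx q0 by (subst ennreal_plus[symmetric]) auto
    then have "F (s + x) * ennreal (?h x) = ennreal (1/q) * F (s + x) + F (s + x) * ennreal (?h x - 1/q)"
      by (simp add: distrib_left mult.commute)
    also have "\<dots> \<le> ennreal (1/q) * F (s + x) + M * ennreal (?h x - 1/q)"
      by (intro add_left_mono mult_right_mono FM) auto
    finally show ?thesis using True by simp
  qed simp
  have S5: "(\<integral>\<^sup>+x. F (s + x) * ennreal (?h x) * indicator {c..1} x \<partial>lborel)
     \<le> ennreal (1/q) * (\<integral>\<^sup>+x. F (s + x) * indicator {c..1} x \<partial>lborel)
        + M * (\<integral>\<^sup>+x. ennreal (?h x - 1/q) * indicator {c..1} x \<partial>lborel)"
  proof -
    have "(\<integral>\<^sup>+x. F (s + x) * ennreal (?h x) * indicator {c..1} x \<partial>lborel)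
      \<le> (\<integral>\<^sup>+x. ennreal (1/q) * (F (s + x) * indicator {c..1} x) + M * (ennreal (?h x - 1/q) * indicator {c..1} x) \<partial>lborel)"
      by (intro nn_integral_mono S4)
    also have "\<dots> = ennreal (1/q) * (\<integral>\<^sup>+x. F (s + x) * indicator {c..1} x \<partial>lborel)
        + M * (\<integral>\<^sup>+x. ennreal (?h x - 1/q) * indicator {c..1} x \<partial>lborel)"
      by (subst nn_integral_add) (auto simp: nn_integral_cmult)
    finally show ?thesis .
  qed
  define X where "X = (\<integral>\<^sup>+x. ennreal (?h x - 1/q) * indicator {c..1} x \<partial>lborel)"
  have S6: "ennreal (1/2) = ennreal (l/q) + X"
  proof -
    have "(\<integral>\<^sup>+x. 1 * ennreal (?h x) * indicator {c..1} x \<partial>lborel) = (\<integral>\<^sup>+u. 1 * indicator {1/2..1::real} u \<partial>lborel)"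
      unfolding c_def by (rule subst_powr[OF q]) simp
    also have "\<dots> = ennreal (1/2)" by simp
    finally have A: "(\<integral>\<^sup>+x. ennreal (?h x) * indicator {c..1} x \<partial>lborel) = ennreal (1/2)" by simp
    have "(\<integral>\<^sup>+x. ennreal (?h x) * indicator {c..1} x \<partial>lborel)
        = (\<integral>\<^sup>+x. ennreal (1/q) * indicator {c..1} x + ennreal (?h x - 1/q) * indicator {c..1} x \<partial>lborel)"
    proof (intro nn_integral_cong)
      fix x :: real
      show "ennreal (?h x) * indicator {c..1} x = ennreal (1/q) * indicator {c..1} x + ennreal (?h x - 1/q) * indicator {c..1} x"
      proof (cases "x \<in> {c..1}")
        case True
        then have hx: "?h x \<ge> 1/q" using h_ge[OF q] c0 by auto
        then show ?thesis using True q0 by (simp add: ennreal_plus[symmetric])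
      qed simp
    qed
    also have "\<dots> = ennreal (1/q) * ennreal (1 - c) + X"
      unfolding X_def using c1 by (subst nn_integral_add) (auto simp: nn_integral_cmult)
    also have "ennreal (1/q) * ennreal (1 - c) = ennreal (l/q)"
      unfolding l_def using c1 q0 by (subst ennreal_mult[symmetric]) auto
    finally show ?thesis using A by simp
  qed
  have lq: "l/q \<le> 1/2"
  proof -
    have "ennreal (l/q) \<le> ennreal (1/2)" unfolding S6 by simp
    then show ?thesis by (rule ennreal_le_iff[THEN iffD1, rotated]) simp
  qed
  have Xe: "X = ennreal (1/2 - l/q)"
  proof -
    have "X = ennreal (l/q) + X - ennreal (l/q)" by simp
    also have "\<dots> = ennreal (1/2) - ennreal (l/q)" unfolding S6 ..
    also have "\<dots> = ennreal (1/2 - l/q)" using l0 q0 by (subst ennreal_minus) auto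
    finally show ?thesis .
  qed
  have L: "ennreal (1/q) * (\<integral>\<^sup>+x. F (s + x) * indicator {c..1} x \<partial>lborel) = ennreal (l/q) * Lam c l F s"
  proof -
    have "ennreal (l/q) * ennreal (1/l) = ennreal (1/q)"
      using l0 q0 by (subst ennreal_mult[symmetric]) auto
    then show ?thesis unfolding Lam_def cl by (simp add: mult.assoc[symmetric])
  qed
  have "Pq q F s \<le> M * ennreal (1/2) + (ennreal (l/q) * Lam c l F s + M * X)"
  proof -
    have S5': "(\<integral>\<^sup>+x. F (s + x) * ennreal (?h x) * indicator {c..1} x \<partial>lborel) \<le> ennreal (l/q) * Lam c l F s + M * X"
      using S5 unfolding L X_def .
    show ?thesis unfolding S1 S3 using S2 S5' by (rule add_mono)
  qed
  also have "\<dots> = ennreal (l/q) * Lam c l F s + M * (ennreal (1/2) + X)"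
    by (simp add: distrib_left add_ac)
  also have "ennreal (1/2) + X = ennreal (1 - l/q)"
    unfolding Xe using lq by (subst ennreal_plus[symmetric]) auto
  finally show ?thesis unfolding l_def c_def by (simp add: mult.commute)
qed

lemma Lam_Pq_comm:
  assumes [measurable]: "F \<in> borel_measurable borel"
  shows "Lam c l (Pq q F) s = Pq q (Lam c l F) s"
proof -
  define f where "f = (\<lambda>x u. F (s + x + u powr q) * indicator {0..1::real} u * indicator {c..c+l} x)"
  have fm: "case_prod f \<in> borel_measurable (lborel \<Otimes>\<^sub>M lborel)" unfolding f_def by measurable
  have "Lam c l (Pq q F) s = ennreal (1/l) * (\<integral>\<^sup>+x. (\<integral>\<^sup>+u. f x u \<partial>lborel) \<partial>lborel)"
  proof -
    have "(\<integral>\<^sup>+u. F (s + x + u powr q) * indicator {0..1} u \<partial>lborel) * indicator {c..c+l} x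
        = (\<integral>\<^sup>+u. f x u \<partial>lborel)" for x
      unfolding f_def by (rule nn_integral_multc[symmetric]) measurable
    then show ?thesis unfolding Lam_def Pq_def by simp
  qed
  also have "(\<integral>\<^sup>+x. (\<integral>\<^sup>+u. f x u \<partial>lborel) \<partial>lborel) = (\<integral>\<^sup>+u. (\<integral>\<^sup>+x. f x u \<partial>lborel) \<partial>lborel)"
    by (rule lborel_pair.Fubini'[OF fm, symmetric])
  also have "ennreal (1/l) * (\<integral>\<^sup>+u. (\<integral>\<^sup>+x. f x u \<partial>lborel) \<partial>lborel) = Pq q (Lam c l F) s"
  proof -
    have "ennreal (1/l) * (\<integral>\<^sup>+x. f x u \<partial>lborel) = Lam c l F (s + u powr q) * indicator {0..1} u" for u
    proof -
      have "(\<integral>\<^sup>+x. f x u \<partial>lborel) = (\<integral>\<^sup>+x. F (s + u powr q + x) * indicator {c..c+l} x \<partial>lborel) * indicator {0..1} u"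
        unfolding f_def by (subst nn_integral_multc[symmetric]) (auto simp: add_ac mult_ac intro!: nn_integral_cong)
      then show ?thesis unfolding Lam_def by (simp add: mult.assoc)
    qed
    then have "ennreal (1/l) * (\<integral>\<^sup>+u. (\<integral>\<^sup>+x. f x u \<partial>lborel) \<partial>lborel) = (\<integral>\<^sup>+u. Lam c l F (s + u powr q) * indicator {0..1} u \<partial>lborel)"
      by (subst nn_integral_cmult[symmetric]) (auto simp: f_def)
    then show ?thesis unfolding Pq_def .
  qed
  finally show ?thesis .
qed

lemma Lam_Pq_iter_comm:
  assumes [measurable]: "F \<in> borel_measurable borel"
  shows "Lam c l ((Pq q ^^ n) F) = (Pq q ^^ n) (Lam c l F)"
proof (induction n)
  case 0 then show ?case by simp
next
  case (Suc n)
  have "Lam c l ((Pq q ^^ Suc n) F) = Lam c l (Pq q ((Pq q ^^ n) F))" by simp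
  also have "\<dots> = Pq q (Lam c l ((Pq q ^^ n) F))"
    by (rule ext, rule Lam_Pq_comm) measurable
  also have "\<dots> = (Pq q ^^ Suc n) (Lam c l F)" using Suc.IH by simp
  finally show ?case .
qed

lemma main_ind:
  fixes A B lam :: real
  assumes q: "q \<ge> 1" and [measurable]: "g \<in> borel_measurable borel"
    and A: "A \<ge> 0" and B: "B \<ge> 0" and lam: "lam \<ge> 0"
    and base: "\<And>m t. (Lam ((1/2) powr q) (1 - (1/2) powr q) ^^ m) g t \<le> ennreal (A + B * lam^m)"
  shows "(Pq q ^^ n) ((Lam ((1/2) powr q) (1 - (1/2) powr q) ^^ j) g) s
     \<le> ennreal (A + B * lam^j * (((1 - (1/2) powr q)/q) * lam + 1 - (1 - (1/2) powr q)/q)^n)"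
proof (induction n arbitrary: j s)
  case 0 then show ?case using base by simp
next
  case (Suc n)
  define c where "c = (1/2::real) powr q"
  define l where "l = 1 - c"
  define w where "w = l / q"
  define r where "r = w * lam + 1 - w"
  have c0: "c > 0" and c1: "c \<le> 1/2" unfolding c_def using c_bounds[OF q] by auto
  have l0: "l > 0" "l \<le> 1" unfolding l_def using c0 c1 by auto
  have w0: "w \<ge> 0" "w \<le> 1" unfolding w_def using l0 q by (auto simp: divide_le_eq)
  have r0: "r \<ge> 0" unfolding r_def using w0 lam mult_nonneg_nonneg[of w lam] by linarith
  have IH: "(Pq q ^^ n) ((Lam c l ^^ j') g) t \<le> ennreal (A + B * lam^j' * r^n)" for j' t
    using Suc.IH[of j' t] unfolding r_def w_def l_def c_def by simp
  define G where "G = (Pq q ^^ n) ((Lam c l ^^ j) g)"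
  have [measurable]: "G \<in> borel_measurable borel" unfolding G_def
    by (intro Pq_iter_meas Lam_iter_meas) simp
  have "(Pq q ^^ Suc n) ((Lam c l ^^ j) g) s = Pq q G s" unfolding G_def by simp
  also have "\<dots> \<le> ennreal w * Lam c l G s + ennreal (1 - w) * ennreal (A + B * lam^j * r^n)"
    using P_step[OF q, of G "ennreal (A + B * lam^j * r^n)" s] IH unfolding G_def w_def l_def c_def
    by auto
  also have "Lam c l G s = (Pq q ^^ n) ((Lam c l ^^ Suc j) g) s"
    unfolding G_def by (simp add: Lam_Pq_iter_comm Lam_iter_meas)
  also have "ennreal w * \<dots> \<le> ennreal w * ennreal (A + B * lam^Suc j * r^n)"
    by (intro mult_left_mono IH) simp
  also have "ennreal w * ennreal (A + B * lam^Suc j * r^n) + ennreal (1 - w) * ennreal (A + B * lam^j * r^n)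
      = ennreal (w * (A + B * lam^Suc j * r^n) + (1 - w) * (A + B * lam^j * r^n))"
  proof -
    have X: "A + B * lam^Suc j * r^n \<ge> 0" and Y: "A + B * lam^j * r^n \<ge> 0"
      using A B lam r0 by (simp_all add: add_nonneg_nonneg mult_nonneg_nonneg)
    have 1: "ennreal w * ennreal (A + B * lam^Suc j * r^n) = ennreal (w * (A + B * lam^Suc j * r^n))"
      using w0 X by (intro ennreal_mult[symmetric]) auto
    have 2: "ennreal (1 - w) * ennreal (A + B * lam^j * r^n) = ennreal ((1 - w) * (A + B * lam^j * r^n))"
      using w0 Y by (intro ennreal_mult[symmetric]) auto
    have 3: "ennreal (w * (A + B * lam^Suc j * r^n)) + ennreal ((1 - w) * (A + B * lam^j * r^n))
       = ennreal (w * (A + B * lam^Suc j * r^n) + (1 - w) * (A + B * lam^j * r^n))"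
      using w0 X Y by (intro ennreal_plus[symmetric] mult_nonneg_nonneg) auto
    show ?thesis unfolding 1 2 3 ..
  qed
  also have "w * (A + B * lam^Suc j * r^n) + (1 - w) * (A + B * lam^j * r^n) = A + B * lam^j * r^Suc n"
    unfolding r_def by (simp add: algebra_simps)
  finally show ?case unfolding r_def w_def l_def c_def by simp
qed

lemma U_prob: "prob_space (uniform_measure lborel {0..1::real})"
  by (rule prob_space_uniform_measure) auto

lemma U_psf: "product_sigma_finite (\<lambda>_::nat. uniform_measure lborel {0..1::real})"
  unfolding product_sigma_finite_def
proof
  fix i :: nat
  interpret prob_space "uniform_measure lborel {0..1::real}" by (rule U_prob)
  show "sigma_finite_measure (uniform_measure lborel {0..1::real})" by unfold_locales
qed

lemma iid_int:
  assumes [measurable]: "f \<in> borel_measurable borel"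
  shows "(\<integral>\<^sup>+u. f (s + (\<Sum>i<n. u i powr q)) \<partial>iid_uniform01 n) = (Pq q ^^ n) f s"
  using assms
proof (induction n arbitrary: f s)
  case 0
  then show ?case unfolding iid_uniform01_def by (simp add: PiM_empty)
next
  case (Suc n)
  note fm[measurable] = Suc.prems
  interpret product_sigma_finite "\<lambda>_::nat. uniform_measure lborel {0..1::real}" by (rule U_psf)
  let ?U = "uniform_measure lborel {0..1::real}"
  have ins: "{..<Suc n} = insert n {..<n}" by auto
  have "(\<integral>\<^sup>+u. f (s + (\<Sum>i<Suc n. u i powr q)) \<partial>iid_uniform01 (Suc n))
     = (\<integral>\<^sup>+x. (\<integral>\<^sup>+y. f (s + (\<Sum>i<Suc n. (x(n := y)) i powr q)) \<partial>?U) \<partial>(PiM {..<n} (\<lambda>_. ?U)))"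
    unfolding iid_uniform01_def ins
    by (rule product_nn_integral_insert) (auto simp: ins[symmetric])
  also have "\<dots> = (\<integral>\<^sup>+x. Pq q f (s + (\<Sum>i<n. x i powr q)) \<partial>(PiM {..<n} (\<lambda>_. ?U)))"
  proof (rule nn_integral_cong)
    fix x :: "nat \<Rightarrow> real"
    have e: "(\<Sum>i<Suc n. (x(n := y)) i powr q) = (\<Sum>i<n. x i powr q) + y powr q" for y
      by simp
    have "(\<integral>\<^sup>+y. f (s + (\<Sum>i<Suc n. (x(n := y)) i powr q)) \<partial>?U)
        = (\<integral>\<^sup>+y. f (s + (\<Sum>i<n. x i powr q) + y powr q) \<partial>?U)"
      unfolding e by (simp add: add.assoc)
    also have "\<dots> = (\<integral>\<^sup>+y. f (s + (\<Sum>i<n. x i powr q) + y powr q) * indicator {0..1} y \<partial>lborel) / emeasure lborel {0..1::real}"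
      by (rule nn_integral_uniform_measure) auto
    also have "\<dots> = Pq q f (s + (\<Sum>i<n. x i powr q))"
      unfolding Pq_def by (simp add: divide_ennreal_def)
    finally show "(\<integral>\<^sup>+y. f (s + (\<Sum>i<Suc n. (x(n := y)) i powr q)) \<partial>?U) = Pq q f (s + (\<Sum>i<n. x i powr q))" .
  qed
  also have "\<dots> = (Pq q ^^ n) (Pq q f) s"
    using Suc.IH[of "Pq q f" s] unfolding iid_uniform01_def by simp
  also have "\<dots> = (Pq q ^^ Suc n) f s" by (simp only: funpow_Suc_right comp_def)
  finally show ?case .
qed

lemma gen_bound:
  fixes A B lam :: real
  assumes q: "q \<ge> 1" and A: "A \<ge> 0" and B: "B \<ge> 0" and lam: "lam \<ge> 0"
    and base: "\<And>m t. (Lam ((1/2) powr q) (1 - (1/2) powr q) ^^ m) (indicator {a..b}) t \<le> ennreal (A + B * lam^m)"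
  shows "(Pq q ^^ n) (indicator {a..b}) 0
     \<le> ennreal (A + B * (((1 - (1/2) powr q)/q) * lam + 1 - (1 - (1/2) powr q)/q)^n)"
  using main_ind[OF q _ A B lam base, of n 0 0] by simp

lemma prob_eq:
  "emeasure (iid_uniform01 n) {u \<in> space (iid_uniform01 n). (\<Sum>i<n. u i powr q) \<in> {a..b}}
    = (Pq q ^^ n) (indicator {a..b}) 0"
proof -
  have "emeasure (iid_uniform01 n) {u \<in> space (iid_uniform01 n). (\<Sum>i<n. u i powr q) \<in> {a..b}}
     = (\<integral>\<^sup>+u. indicator {u \<in> space (iid_uniform01 n). (\<Sum>i<n. u i powr q) \<in> {a..b}} u \<partial>iid_uniform01 n)"
    by (rule nn_integral_indicator[symmetric]) (simp add: iid_uniform01_def)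
  also have "\<dots> = (\<integral>\<^sup>+u. indicator {a..b} (0 + (\<Sum>i<n. u i powr q)) \<partial>iid_uniform01 n)"
    by (rule nn_integral_cong) (simp add: indicator_def)
  also have "\<dots> = (Pq q ^^ n) (indicator {a..b}) 0"
    by (rule iid_int) simp
  finally show ?thesis .
qed

lemma core:
  assumes q: "q \<ge> 1" and ab: "a \<le> b" and n: "real n > 2*q"
  defines "l \<equiv> 1 - (1/2::real) powr q"
  defines "x \<equiv> real n * (l / q)"
  shows "\<exists>k0::nat. k0 \<ge> 1 \<and> real k0 \<ge> x / 4 \<and>
     (Pq q ^^ n) (indicator {a..b}) 0 \<le> ennreal (2*(b-a)/(l * sqrt (real k0)) + exp (- x * (1 - ln 2)/2))"
proof -
  define c where "c = (1/2::real) powr q"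
  define w where "w = l / q"
  let ?g = "indicator {a..b} :: real \<Rightarrow> ennreal"
  have c0: "c > 0" and c1: "c \<le> 1/2" unfolding c_def using c_bounds[OF q] by auto
  have lc: "l = 1 - c" unfolding l_def c_def ..
  have l0: "l \<ge> 1/2" "l \<le> 1" "l > 0" unfolding lc using c0 c1 by auto
  have q0: "q > 0" using q by simp
  have w0: "w > 0" "w \<le> 1" unfolding w_def using l0 q by (auto simp: divide_le_eq)
  have xw: "x = real n * w" unfolding x_def w_def ..
  have x1: "x > 1"
  proof -
    have "w \<ge> 1/(2*q)" unfolding w_def using l0 q0 by (simp add: field_simps)
    then have "x \<ge> real n * (1/(2*q))" unfolding xw by (intro mult_left_mono) auto
    moreover have "real n * (1/(2*q)) > 1" using n q0 by (simp add: field_simps)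
    ultimately show ?thesis by linarith
  qed
  have g1: "\<And>t. ?g t \<le> 1" by (simp add: indicator_def)
  have ln2: "ln 2 < (1::real)" "ln 2 > (0::real)" using ln_2_less_1 by auto
  have Lnn: "2*(b-a)/l \<ge> 0" using ab l0 by simp
  show ?thesis
  proof (cases "x \<ge> 2")
    case True
    define k0 where "k0 = nat \<lfloor>x/2\<rfloor>"
    have fl1: "\<lfloor>x/2\<rfloor> \<ge> 1" using True by (simp add: le_floor_iff)
    have k0r: "real k0 = real_of_int \<lfloor>x/2\<rfloor>" unfolding k0_def using fl1 by simp
    have k0a: "real k0 \<le> x/2" unfolding k0r using of_int_floor_le[of "x/2"] by linarith
    have k0b: "real k0 > x/2 - 1" unfolding k0r by linarith
    have "real k0 \<ge> 1" unfolding k0r using fl1 by simp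
    then have k01: "k0 \<ge> 1" by simp
    have k0c: "real k0 \<ge> x/4"
    proof (cases "x \<ge> 4")
      case True then show ?thesis using k0b by linarith
    next
      case False then show ?thesis using k01 by simp
    qed
    define A where "A = 2*(b-a)/(l * sqrt (real k0))"
    have A0: "A \<ge> 0" unfolding A_def using ab l0 by simp
    have base: "(Lam c l ^^ m) ?g t \<le> ennreal (A + 2^k0 * (1/2)^m)" for m t
    proof (cases "m < k0")
      case True
      have r1: "(1::real) \<le> 2^k0 * (1/2)^m"
      proof -
        have "(2::real)^m \<le> 2^k0" using True by (intro power_increasing) auto
        then show ?thesis by (simp add: power_one_over field_simps)
      qed
      have "(Lam c l ^^ m) ?g t \<le> 1" by (rule Lam_pow_le[OF l0(3) g1])
      also have "(1::ennreal) \<le> ennreal (A + 2^k0 * (1/2)^m)"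
        using ennreal_leI[of 1 "A + 2^k0 * (1/2)^m"] r1 A0 by simp
      finally show ?thesis .
    next
      case False
      then have m1: "m \<ge> 1" using k01 by simp
      have "(Lam c l ^^ m) ?g t \<le> ennreal (2*(b-a)/(l * sqrt (real m)))"
        by (rule IH_bound[OF l0(3) ab m1])
      also have "2*(b-a)/(l * sqrt (real m)) \<le> A"
        unfolding A_def using False ab l0 k01
        by (intro divide_left_mono mult_left_mono mult_pos_pos) auto
      then have "ennreal (2*(b-a)/(l * sqrt (real m))) \<le> ennreal (A + 2^k0 * (1/2)^m)"
        by (intro ennreal_leI) (simp add: add_increasing2)
      finally show ?thesis .
    qed
    have P: "(Pq q ^^ n) ?g 0 \<le> ennreal (A + 2^k0 * (w * (1/2) + 1 - w)^n)"
      using gen_bound[OF q A0 _ _ base[unfolded c_def lc]] unfolding w_def l_def c_def by simp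
    have E: "2^k0 * (w * (1/2) + 1 - w)^n \<le> exp (- x * (1 - ln 2)/2)"
    proof -
      have "(2::real)^k0 = exp (real k0 * ln 2)" by (simp add: exp_of_nat_mult)
      also have "\<dots> \<le> exp (x/2 * ln 2)" using k0a ln2 by (intro exp_mono mult_right_mono) auto
      finally have e1: "(2::real)^k0 \<le> exp (x/2 * ln 2)" .
      have "(w * (1/2) + 1 - w)^n \<le> (exp (- w/2))^n"
        using w0 exp_ge_add_one_self[of "-w/2"] by (intro power_mono) auto
      also have "\<dots> = exp (real n * (- w/2))" by (subst exp_of_nat_mult[symmetric]) simp
      also have "real n * (- w/2) = - x/2" unfolding xw by simp
      finally have e2: "(w * (1/2) + 1 - w)^n \<le> exp (- x/2)" .
      have "2^k0 * (w * (1/2) + 1 - w)^n \<le> exp (x/2 * ln 2) * exp (- x/2)"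
        using e1 e2 w0 by (intro mult_mono) auto
      also have "\<dots> = exp (- x * (1 - ln 2)/2)" by (simp add: exp_add[symmetric] algebra_simps)
      finally show ?thesis .
    qed
    have "(Pq q ^^ n) ?g 0 \<le> ennreal (A + exp (- x * (1 - ln 2)/2))"
      using P E by (meson add_left_mono ennreal_leI order_trans)
    then show ?thesis using k01 k0c unfolding A_def by blast
  next
    case False
    define A where "A = 2*(b-a)/l"
    have A0: "A \<ge> 0" unfolding A_def using ab l0 by simp
    have base: "(Lam c l ^^ m) ?g t \<le> ennreal (A + 1 * 0^m)" for m t
    proof (cases "m = 0")
      case True
      have "(1::ennreal) \<le> ennreal (A + 1 * 0^m)"
        using ennreal_leI[of 1 "A + 1 * 0^m"] A0 True by simp
      then show ?thesis using g1[of t] True by (metis funpow_0 order_trans)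
    next
      case False
      then have m1: "m \<ge> 1" by simp
      have "(Lam c l ^^ m) ?g t \<le> ennreal (2*(b-a)/(l * sqrt (real m)))"
        by (rule IH_bound[OF l0(3) ab m1])
      also have "2*(b-a)/(l * sqrt (real m)) \<le> A"
        unfolding A_def using m1 ab l0
        by (intro divide_left_mono) (auto intro: order_trans[of _ l] simp: mult_le_cancel_left1)
      then have "ennreal (2*(b-a)/(l * sqrt (real m))) \<le> ennreal (A + 1 * 0^m)"
        using False by (intro ennreal_leI) (simp add: zero_power)
      finally show ?thesis .
    qed
    have P: "(Pq q ^^ n) ?g 0 \<le> ennreal (A + 1 * (w * 0 + 1 - w)^n)"
      using gen_bound[OF q A0 _ _ base[unfolded c_def lc]] unfolding w_def l_def c_def by simp
    have E: "(1 - w)^n \<le> exp (- x * (1 - ln 2)/2)"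
    proof -
      have "(1 - w)^n \<le> (exp (- w))^n"
        using w0 exp_ge_add_one_self[of "-w"] by (intro power_mono) auto
      also have "\<dots> = exp (- x)" unfolding xw by (simp add: exp_of_nat_mult[symmetric])
      also have "\<dots> \<le> exp (- x * (1 - ln 2)/2)"
      proof -
        have xl: "x * ln 2 \<ge> 0" using x1 ln2 by simp
        have e: "-x*(1-ln 2)/2 = -x/2 + (x*ln 2)/2" by (simp add: field_simps)
        show ?thesis by (rule exp_mono) (use xl x1 e in linarith)
      qed
      finally show ?thesis .
    qed
    have "(Pq q ^^ n) ?g 0 \<le> ennreal (A + exp (- x * (1 - ln 2)/2))"
      using P E by (simp add: ennreal_leI order_trans)
    moreover have "A = 2*(b-a)/(l * sqrt (real (1::nat)))" unfolding A_def by simp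
    moreover have "real (1::nat) \<ge> x/4" using False by simp
    ultimately show ?thesis by (metis le_refl)
  qed
qed

theorem proposition5p2:
  shows "\<exists>c C :: real. c > 0 \<and> C > 0 \<and>
    (\<forall>(q::real) (d::nat) (a::real) (b::real).
       q \<ge> 1 \<longrightarrow> real d - 1 > 2 * q \<longrightarrow> a \<le> b \<longrightarrow>
       measure (iid_uniform01 (d - 1))
         {u \<in> space (iid_uniform01 (d - 1)). (\<Sum>i<d - 1. u i powr q) \<in> {a..b}}
       \<le> exp (- c * real d / q) + C * (b - a) * sqrt (q / real d))"
proof (intro exI conjI allI impI)
  have ln2: "ln 2 < (1::real)" by (rule ln_2_less_1)
  show "(1 - ln 2) / 8 > (0::real)" using ln2 by simp
  show "(16::real) > 0" by simp
  fix q :: real and d :: nat and a b :: real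
  assume q: "q \<ge> 1" and dq: "real d - 1 > 2 * q" and ab: "a \<le> b"
  define n where "n = d - 1"
  have d2: "d \<ge> 2" using dq q by linarith
  have nr: "real n = real d - 1" unfolding n_def using d2 by simp
  have n: "real n > 2 * q" using dq nr by simp
  define l where "l = 1 - (1/2::real) powr q"
  define x where "x = real n * (l / q)"
  have l0: "l \<ge> 1/2" "l \<le> 1" unfolding l_def using c_bounds[OF q] by auto
  have q0: "q > 0" using q by simp
  obtain k0 :: nat where k01: "k0 \<ge> 1" and k0x: "real k0 \<ge> x / 4"
    and P: "(Pq q ^^ n) (indicator {a..b}) 0 \<le> ennreal (2*(b-a)/(l * sqrt (real k0)) + exp (- x * (1 - ln 2)/2))"
    using core[OF q ab n] unfolding l_def x_def by blast
  have xd: "x \<ge> real d / (4 * q)"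
  proof -
    have "l / q \<ge> 1 / (2 * q)" using l0 q0 by (simp add: field_simps)
    then have "x \<ge> real n * (1 / (2 * q))" unfolding x_def by (intro mult_left_mono) auto
    moreover have "real n * (1 / (2 * q)) \<ge> real d / (4 * q)"
      using nr d2 q0 by (simp add: field_simps)
    ultimately show ?thesis by linarith
  qed
  have R0: "2*(b-a)/(l * sqrt (real k0)) + exp (- x * (1 - ln 2)/2) \<ge> 0"
    using ab l0 by simp
  have "measure (iid_uniform01 n) {u \<in> space (iid_uniform01 n). (\<Sum>i<n. u i powr q) \<in> {a..b}}
      = enn2real ((Pq q ^^ n) (indicator {a..b}) 0)"
    unfolding measure_def prob_eq ..
  also have "\<dots> \<le> 2*(b-a)/(l * sqrt (real k0)) + exp (- x * (1 - ln 2)/2)"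
    by (rule enn2real_leI[OF R0 P])
  also have "\<dots> \<le> 16 * (b - a) * sqrt (q / real d) + exp (- ((1 - ln 2) / 8) * real d / q)"
  proof (rule add_mono)
    have k0pos: "sqrt (real k0) > 0" using k01 by simp
    have "2 / (l * sqrt (real k0)) \<le> 4 / sqrt (real k0)"
      using l0 k0pos by (simp add: field_simps)
    also have "4 / sqrt (real k0) \<le> 16 * sqrt (q / real d)"
    proof -
      have "q * real k0 / real d \<ge> 1/16"
      proof -
        have "real k0 \<ge> real d / (16 * q)" using k0x xd by (simp add: field_simps)
        then have "q * real k0 \<ge> q * (real d / (16 * q))" using q0 by (intro mult_left_mono) auto
        then have "q * real k0 \<ge> real d / 16" using q0 by simp
        then show ?thesis using d2 by (simp add: field_simps)
      qed
      then have "sqrt (q * real k0 / real d) \<ge> sqrt (1/16)" by (rule real_sqrt_le_mono)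
      moreover have "sqrt (1/16::real) = 1/4"
        by (simp add: real_sqrt_divide)
      moreover have "sqrt (q * real k0 / real d) = sqrt (q / real d) * sqrt (real k0)"
        by (simp add: real_sqrt_mult[symmetric])
      ultimately have "sqrt (q / real d) * sqrt (real k0) \<ge> 1/4" by simp
      then show ?thesis using k0pos by (simp add: field_simps)
    qed
    finally have "2 / (l * sqrt (real k0)) \<le> 16 * sqrt (q / real d)" .
    then have "(b - a) * (2 / (l * sqrt (real k0))) \<le> (b - a) * (16 * sqrt (q / real d))"
      using ab by (intro mult_left_mono) auto
    note H = this
    have e1: "2*(b-a)/(l * sqrt (real k0)) = (b - a) * (2 / (l * sqrt (real k0)))" by simp
    have e2: "16 * (b - a) * sqrt (q / real d) = (b - a) * (16 * sqrt (q / real d))" by simp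
    show "2*(b-a)/(l * sqrt (real k0)) \<le> 16 * (b - a) * sqrt (q / real d)"
      unfolding e1 e2 by (rule H)
  next
    have "(1 - ln 2) / 8 * real d / q = (1 - ln 2)/2 * (real d / (4 * q))" by (simp add: field_simps)
    also have "\<dots> \<le> (1 - ln 2)/2 * x" using xd ln2 by (intro mult_left_mono) auto
    finally show "exp (- x * (1 - ln 2)/2) \<le> exp (- ((1 - ln 2) / 8) * real d / q)"
      by (simp add: field_simps)
  qed
  finally show "measure (iid_uniform01 (d - 1))
         {u \<in> space (iid_uniform01 (d - 1)). (\<Sum>i<d - 1. u i powr q) \<in> {a..b}}
       \<le> exp (- ((1 - ln 2) / 8) * real d / q) + 16 * (b - a) * sqrt (q / real d)"
    unfolding n_def by (simp add: add.commute)
qed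

end
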